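(* Fix $(\varepsilon,\delta)\in(0,1)\times(0,\delta_0]$ and suppose $\mathcal R^\ast(\varepsilon,\delta|p_{X_1X_2},p_{K_1K_2})\neq\emptyset$. Then for every $\gamma>0$ there exists $n_0=n_0(\gamma)$ such that for all $n\ge n_0$, $$H(X_i|X_{3-i})\le H(K_i)+\gamma+\zeta_n(\gamma,\varepsilon,\delta),\quad i=1,2,$$ $$H(X_1X_2)\le H(K_1K_2)+\gamma+\zeta_n(\gamma,\varepsilon,\delta).$$
   Context: All logarithms are base 2. $\mathcal X_1,\mathcal X_2$ are finite fields. $(X_1,X_2)$ has joint pmf $p_{X_1X_2}$ on $\mathcal X_1\times\mathcal X_2$ and $(K_1,K_2)$ has joint pmf $p_{K_1K_2}$ on $\mathcal X_1\times\mathcal X_2$. For block length $n$, $(\mathbf X_1,\mathbf X_2)$ is i.i.d. with law $p^n_{X_1X_2}$ (source), $(\mathbf K_1,\mathbf K_2)$ is i.i.d. with law $p^n_{K_1K_2}$ (keys), and the keys are independent of the sources. A distributed source encryption system at block length $n$ consists of finite sets $\mathcal C_i^{(n)}$, encryption maps $\Phi_i^{(n)}:\mathcal X_i^n\times\mathcal X_i^n\to\mathcal C_i^{(n)}$ (key, plaintext) and a decryption map $\Psi^{(n)}:\mathcal X_1^n\times\mathcal X_2^n\times\mathcal C_1^{(n)}\times\mathcal C_2^{(n)}\to\mathcal X_1^n\times\mathcal X_2^n$, such that there exist maps $\phi_i^{(n)}:\mathcal X_i^n\to\mathcal M_i^{(n)}$ (finite $\mathcal M_i^{(n)}$) and $\psi^{(n)}$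 with $\Psi^{(n)}(\mathbf k_1,\mathbf k_2,\Phi_1^{(n)}(\mathbf k_1,\mathbf x_1),\Phi_2^{(n)}(\mathbf k_2,\mathbf x_2))=\psi^{(n)}(\phi_1^{(n)}(\mathbf x_1),\phi_2^{(n)}(\mathbf x_2))$ for all keys and plaintexts. Ciphertexts: $C_i^{(n)}=\Phi_i^{(n)}(\mathbf K_i,\mathbf X_i)$. Correct decoding set $\mathcal D^{(n)}:=\{(\mathbf x_1,\mathbf x_2):\psi^{(n)}(\phi_1^{(n)}(\mathbf x_1),\phi_2^{(n)}(\mathbf x_2))=(\mathbf x_1,\mathbf x_2)\}$; error probability $p_{\rm e}:=\Pr[(\mathbf X_1,\mathbf X_2)\notin\mathcal D^{(n)}]$. Fix a constant $\delta_0>0$. For $(\varepsilon,\delta)\in(0,1)\times[0,\delta_0]$, $(R_1,R_2)$ is an $(\varepsilon,\delta)$-reliable and secure rate pair if there is a sequence of systems $\{(\Phi_1^{(n)},\Phi_2^{(n)},\Psi^{(n)})\}_{n\ge1}$ such that for every $\gamma>0$ there is $n_0$ with, for all $n\ge n_0$: $\frac1n\log|\mathcal C_i^{(n)}|\le R_i+\gamma$ ($i=1,2$), $p_{\rm e}\le\varepsilon$, and $I(C_1^{(n)}C_2^{(n)};\mathbf X_1\mathbf X_2)\le\delta$. $\mathcal R^\ast(\varepsilon,\delta|p_{X_1X_2},p_{K_1K_2})$ is the set of such pairs. For $\gamma>0$ let $\tilde{\mathcal A}^{(n)}_\gamma$ be the set of $(\mathbf x_1,\mathbf x_2)\in\mathcal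 X_1^n\times\mathcal X_2^n$ with $\bigl|\frac1n\log\frac1{p^n_{X_i|X_{3-i}}(\mathbf x_i|\mathbf x_{3-i})}-H(X_i|X_{3-i})\bigr|\le\gamma$ for $i=1,2$ and $\bigl|\frac1n\log\frac1{p^n_{X_1X_2}(\mathbf x_1,\mathbf x_2)}-H(X_1X_2)\bigr|\le\gamma$. Set $\nu_n(\gamma):=p^n_{X_1X_2}((\tilde{\mathcal A}^{(n)}_\gamma)^c)$, $\nu_n(\gamma,\varepsilon):=\nu_n(\gamma)+\varepsilon$, and $\zeta_n(\gamma,\varepsilon,\delta):=\frac1n\Bigl[\frac{\delta}{1-\nu_n(\gamma,\varepsilon)}+\log\frac1{1-\nu_n(\gamma,\varepsilon)}\Bigr]$. *)

theory Defs
  imports "HOL-Probability.Probability"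
begin

definition entropy_pmf :: "'a pmf \<Rightarrow> real" where
  "entropy_pmf p = - (\<Sum>x\<in>set_pmf p. pmf p x * log 2 (pmf p x))"

definition cond_entropy_pmf :: "('u \<times> 'v) pmf \<Rightarrow> real" where
  "cond_entropy_pmf q = - (\<Sum>z\<in>set_pmf q. pmf q z * log 2 (pmf q z / pmf (map_pmf snd q) (snd z)))"

definition mutual_info_pmf :: "('u \<times> 'v) pmf \<Rightarrow> real" where
  "mutual_info_pmf q = (\<Sum>z\<in>set_pmf q. pmf q z *
      log 2 (pmf q z / (pmf (map_pmf fst q) (fst z) * pmf (map_pmf snd q) (snd z))))"

definition block_pmf :: "nat \<Rightarrow> ('a \<times> 'b) pmf \<Rightarrow> ('a list \<times> 'b list) pmf" where
  "block_pmf n p = map_pmf (\<lambda>zs. (map fst zs, map snd zs)) (replicate_pmf n p)"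

definition swap_pmf :: "('a \<times> 'b) pmf \<Rightarrow> ('b \<times> 'a) pmf" where
  "swap_pmf p = map_pmf (\<lambda>(a, b). (b, a)) p"

definition cond_block_prob :: "nat \<Rightarrow> ('a \<times> 'b) pmf \<Rightarrow> 'a list \<Rightarrow> 'b list \<Rightarrow> real" where
  "cond_block_prob n p xs ys =
     (\<Prod>i<n. pmf p (xs ! i, ys ! i) / pmf (map_pmf snd p) (ys ! i))"

definition typ_set :: "('a \<times> 'b) pmf \<Rightarrow> nat \<Rightarrow> real \<Rightarrow> ('a list \<times> 'b list) set" where
  "typ_set p n \<gamma> = {(x1, x2). length x1 = n \<and> length x2 = n \<and>
      \<bar>(1 / real n) * log 2 (1 / cond_block_prob n p x1 x2) - cond_entropy_pmf p\<bar> \<le> \<gamma> \<and>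
      \<bar>(1 / real n) * log 2 (1 / cond_block_prob n (swap_pmf p) x2 x1) - cond_entropy_pmf (swap_pmf p)\<bar> \<le> \<gamma> \<and>
      \<bar>(1 / real n) * log 2 (1 / pmf (block_pmf n p) (x1, x2)) - entropy_pmf p\<bar> \<le> \<gamma>}"

definition nu :: "('a \<times> 'b) pmf \<Rightarrow> nat \<Rightarrow> real \<Rightarrow> real" where
  "nu p n \<gamma> = measure_pmf.prob (block_pmf n p) (- typ_set p n \<gamma>)"

definition nu_eps :: "('a \<times> 'b) pmf \<Rightarrow> nat \<Rightarrow> real \<Rightarrow> real \<Rightarrow> real" where
  "nu_eps p n \<gamma> \<epsilon> = nu p n \<gamma> + \<epsilon>"

definition zeta :: "('a \<times> 'b) pmf \<Rightarrow> nat \<Rightarrow> real \<Rightarrow> real \<Rightarrow> real \<Rightarrow> real" where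
  "zeta p n \<gamma> \<epsilon> \<delta> = (1 / real n) *
     (\<delta> / (1 - nu_eps p n \<gamma> \<epsilon>) + log 2 (1 / (1 - nu_eps p n \<gamma> \<epsilon>)))"

text \<open>Ciphertext alphabets C_i^{(n)} and message alphabets M_i^{(n)} are finite sets of
  naturals (any finite set can be encoded injectively into nat).  Encryption maps take
  (key, plaintext).\<close>
definition is_system ::
  "nat \<Rightarrow> nat set \<Rightarrow> nat set \<Rightarrow>
   ('a list \<Rightarrow> 'a list \<Rightarrow> nat) \<Rightarrow> ('b list \<Rightarrow> 'b list \<Rightarrow> nat) \<Rightarrow>
   ('a list \<Rightarrow> 'b list \<Rightarrow> nat \<Rightarrow> nat \<Rightarrow> 'a list \<times> 'b list) \<Rightarrow>
   nat set \<Rightarrow> nat set \<Rightarrow> ('a list \<Rightarrow> nat) \<Rightarrow> ('b list \<Rightarrow> nat) \<Rightarrow>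
   (nat \<Rightarrow> nat \<Rightarrow> 'a list \<times> 'b list) \<Rightarrow> bool" where
  "is_system n C1 C2 Enc1 Enc2 Dec M1 M2 ph1 ph2 ps \<longleftrightarrow>
     finite C1 \<and> finite C2 \<and> finite M1 \<and> finite M2 \<and>
     (\<forall>k x. length k = n \<and> length x = n \<longrightarrow> Enc1 k x \<in> C1) \<and>
     (\<forall>k x. length k = n \<and> length x = n \<longrightarrow> Enc2 k x \<in> C2) \<and>
     (\<forall>x. length x = n \<longrightarrow> ph1 x \<in> M1) \<and>
     (\<forall>x. length x = n \<longrightarrow> ph2 x \<in> M2) \<and>
     (\<forall>k1 k2 x1 x2. length k1 = n \<and> length k2 = n \<and> length x1 = n \<and> length x2 = n \<longrightarrow>
        Dec k1 k2 (Enc1 k1 x1) (Enc2 k2 x2) = ps (ph1 x1) (ph2 x2))"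

definition cipher_source_pmf ::
  "nat \<Rightarrow> ('a \<times> 'b) pmf \<Rightarrow> ('a \<times> 'b) pmf \<Rightarrow>
   ('a list \<Rightarrow> 'a list \<Rightarrow> nat) \<Rightarrow> ('b list \<Rightarrow> 'b list \<Rightarrow> nat) \<Rightarrow>
   ((nat \<times> nat) \<times> ('a list \<times> 'b list)) pmf" where
  "cipher_source_pmf n pX pK Enc1 Enc2 =
     do { (x1, x2) \<leftarrow> block_pmf n pX;
          (k1, k2) \<leftarrow> block_pmf n pK;
          return_pmf ((Enc1 k1 x1, Enc2 k2 x2), (x1, x2)) }"

definition error_prob ::
  "nat \<Rightarrow> ('a \<times> 'b) pmf \<Rightarrow> ('a list \<Rightarrow> nat) \<Rightarrow> ('b list \<Rightarrow> nat) \<Rightarrow>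
   (nat \<Rightarrow> nat \<Rightarrow> 'a list \<times> 'b list) \<Rightarrow> real" where
  "error_prob n pX ph1 ph2 ps =
     measure_pmf.prob (block_pmf n pX) {(x1, x2). ps (ph1 x1) (ph2 x2) \<noteq> (x1, x2)}"

definition rate_region :: "real \<Rightarrow> real \<Rightarrow> ('a \<times> 'b) pmf \<Rightarrow> ('a \<times> 'b) pmf \<Rightarrow> (real \<times> real) set" where
  "rate_region \<epsilon> \<delta> pX pK = {(R1, R2).
     \<exists>(C1 :: nat \<Rightarrow> nat set) (C2 :: nat \<Rightarrow> nat set)
      (Enc1 :: nat \<Rightarrow> 'a list \<Rightarrow> 'a list \<Rightarrow> nat) (Enc2 :: nat \<Rightarrow> 'b list \<Rightarrow> 'b list \<Rightarrow> nat)
      (Dec :: nat \<Rightarrow> 'a list \<Rightarrow> 'b list \<Rightarrow> nat \<Rightarrow> nat \<Rightarrow> 'a list \<times> 'b list)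
      (M1 :: nat \<Rightarrow> nat set) (M2 :: nat \<Rightarrow> nat set)
      (ph1 :: nat \<Rightarrow> 'a list \<Rightarrow> nat) (ph2 :: nat \<Rightarrow> 'b list \<Rightarrow> nat)
      (ps :: nat \<Rightarrow> nat \<Rightarrow> nat \<Rightarrow> 'a list \<times> 'b list).
       (\<forall>n\<ge>1. is_system n (C1 n) (C2 n) (Enc1 n) (Enc2 n) (Dec n) (M1 n) (M2 n) (ph1 n) (ph2 n) (ps n)) \<and>
       (\<forall>\<gamma>>0. \<exists>n0. \<forall>n\<ge>n0.
          (1 / real n) * log 2 (real (card (C1 n))) \<le> R1 + \<gamma> \<and>
          (1 / real n) * log 2 (real (card (C2 n))) \<le> R2 + \<gamma> \<and>
          error_prob n pX (ph1 n) (ph2 n) (ps n) \<le> \<epsilon> \<and>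
          mutual_info_pmf (cipher_source_pmf n pX pK (Enc1 n) (Enc2 n)) \<le> \<delta>)}"

end

theory Submission
  imports Defs
begin


definition Exp :: "'a pmf \<Rightarrow> ('a \<Rightarrow> real) \<Rightarrow> real" where
  "Exp p f = (\<Sum>x\<in>set_pmf p. pmf p x * f x)"

lemma Exp_cong: "(\<And>x. x \<in> set_pmf p \<Longrightarrow> f x = g x) \<Longrightarrow> Exp p f = Exp p g"
  unfolding Exp_def by (intro sum.cong) auto

lemma Exp_return[simp]: "Exp (return_pmf a) f = f a"
  by (simp add: Exp_def)

lemma Exp_add: "Exp p (\<lambda>x. f x + g x) = Exp p f + Exp p g"
  by (simp add: Exp_def sum.distrib algebra_simps)

lemma Exp_diff: "Exp p (\<lambda>x. f x - g x) = Exp p f - Exp p g"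
  by (simp add: Exp_def sum_subtractf algebra_simps)

lemma Exp_cmult: "Exp p (\<lambda>x. c * f x) = c * Exp p f"
  by (simp add: Exp_def sum_distrib_left algebra_simps)

lemma Exp_const: "finite (set_pmf p) \<Longrightarrow> Exp p (\<lambda>x. c) = c"
  by (simp add: Exp_def sum_distrib_right[symmetric] sum_pmf_eq_1)

lemma Exp_mono: "(\<And>x. x \<in> set_pmf p \<Longrightarrow> f x \<le> g x) \<Longrightarrow> Exp p f \<le> Exp p g"
  unfolding Exp_def by (intro sum_mono mult_left_mono) auto

lemma Exp_nonneg: "(\<And>x. x \<in> set_pmf p \<Longrightarrow> 0 \<le> f x) \<Longrightarrow> 0 \<le> Exp p f"
  unfolding Exp_def by (intro sum_nonneg) auto

lemma Exp_sum_super: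
  assumes "finite A" "set_pmf p \<subseteq> A"
  shows "Exp p f = (\<Sum>x\<in>A. pmf p x * f x)"
  unfolding Exp_def using assms by (intro sum.mono_neutral_left) (auto simp: set_pmf_eq)

lemma pmf_bind_finite:
  assumes "finite (set_pmf p)"
  shows "pmf (bind_pmf p h) y = (\<Sum>x\<in>set_pmf p. pmf p x * pmf (h x) y)"
  unfolding pmf_bind using assms by (subst integral_measure_pmf_real[where A="set_pmf p"]) (auto simp: mult.commute)

lemma Exp_bind:
  assumes "finite (set_pmf p)" "\<And>x. x \<in> set_pmf p \<Longrightarrow> finite (set_pmf (h x))"
  shows "Exp (bind_pmf p h) f = Exp p (\<lambda>x. Exp (h x) f)"
proof -
  let ?U = "set_pmf (bind_pmf p h)"
  have fU: "finite ?U" using assms by (simp add: set_bind_pmf)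
  have "Exp (bind_pmf p h) f = (\<Sum>y\<in>?U. (\<Sum>x\<in>set_pmf p. pmf p x * pmf (h x) y) * f y)"
    unfolding Exp_def using assms(1) by (simp add: pmf_bind_finite)
  also have "\<dots> = (\<Sum>x\<in>set_pmf p. pmf p x * (\<Sum>y\<in>?U. pmf (h x) y * f y))"
    unfolding sum_distrib_right sum_distrib_left by (rule trans[OF sum.swap]) (simp add: algebra_simps)
  also have "\<dots> = (\<Sum>x\<in>set_pmf p. pmf p x * Exp (h x) f)"
  proof (intro sum.cong refl arg_cong2[where f="(*)"])
    fix x assume x: "x \<in> set_pmf p"
    show "(\<Sum>y\<in>?U. pmf (h x) y * f y) = Exp (h x) f"
      using Exp_sum_super[OF fU, of "h x" f] x by (force simp: set_bind_pmf)
  qed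
  finally show ?thesis by (simp add: Exp_def)
qed

lemma Exp_map:
  assumes "finite (set_pmf p)"
  shows "Exp (map_pmf g p) f = Exp p (\<lambda>x. f (g x))"
  unfolding map_pmf_def using assms by (subst Exp_bind) (auto simp: Exp_def)




lemma gibbs_term:
  fixes a b :: real
  assumes "0 \<le> a" "0 \<le> b" "0 < a \<Longrightarrow> 0 < b"
  shows "(a - b) / ln 2 \<le> a * log 2 (a / b)"
proof (cases "a = 0")
  case True then show ?thesis using assms by (simp add: divide_nonpos_pos)
next
  case False
  then have a: "0 < a" using assms by simp
  then have b: "0 < b" using assms by simp
  have "ln (b / a) \<le> b / a - 1" using a b by (intro ln_le_minus_one) simp
  then have "a * ln (b / a) \<le> b - a" using a by (simp add: field_simps)
  moreover have "ln (a / b) = - ln (b / a)" using a b by (simp add: ln_div)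
  ultimately have "a - b \<le> a * ln (a / b)" by simp
  then show ?thesis by (simp add: log_def divide_right_mono)
qed

lemma gibbs:
  fixes a b :: "'t \<Rightarrow> real"
  assumes "finite T" "\<And>t. t \<in> T \<Longrightarrow> 0 \<le> a t" "\<And>t. t \<in> T \<Longrightarrow> 0 \<le> b t"
    "\<And>t. t \<in> T \<Longrightarrow> 0 < a t \<Longrightarrow> 0 < b t" "sum b T \<le> sum a T"
  shows "0 \<le> (\<Sum>t\<in>T. a t * log 2 (a t / b t))"
proof -
  have "0 \<le> (\<Sum>t\<in>T. (a t - b t) / ln 2)"
    using assms(5) by (simp add: sum_divide_distrib[symmetric] sum_subtractf)
  also have "\<dots> \<le> (\<Sum>t\<in>T. a t * log 2 (a t / b t))"
    using assms by (intro sum_mono gibbs_term) auto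
  finally show ?thesis .
qed



definition cs_pmf :: "'x pmf \<Rightarrow> 'k pmf \<Rightarrow> ('k \<Rightarrow> 'x \<Rightarrow> 'c) \<Rightarrow> ('c \<times> 'x) pmf" where
  "cs_pmf px pk enc = bind_pmf px (\<lambda>x. bind_pmf pk (\<lambda>k. return_pmf (enc k x, x)))"

lemma set_cs_pmf: "set_pmf (cs_pmf px pk enc) = (\<Union>x\<in>set_pmf px. \<Union>k\<in>set_pmf pk. {(enc k x, x)})"
  by (simp add: cs_pmf_def set_bind_pmf)

lemma finite_cs_pmf: "finite (set_pmf px) \<Longrightarrow> finite (set_pmf pk) \<Longrightarrow> finite (set_pmf (cs_pmf px pk enc))"
  by (simp add: set_cs_pmf)

lemma map_snd_cs_pmf: "map_pmf snd (cs_pmf px pk enc) = px"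
proof -
  have "map_pmf snd (cs_pmf px pk enc) = bind_pmf px (\<lambda>x. map_pmf snd (map_pmf (\<lambda>k. (enc k x, x)) pk))"
    by (simp add: cs_pmf_def map_bind_pmf map_pmf_def[symmetric])
  also have "\<dots> = bind_pmf px return_pmf"
    by (simp add: map_pmf_comp map_pmf_const)
  finally show ?thesis by (simp add: bind_return_pmf')
qed

lemma pmf_cs_pmf:
  assumes "finite (set_pmf px)"
  shows "pmf (cs_pmf px pk enc) (c, x) = pmf px x * pmf (map_pmf (\<lambda>k. enc k x) pk) c"
proof -
  have inner: "pmf (bind_pmf pk (\<lambda>k. return_pmf (enc k x', x'))) (c, x) =
      (if x' = x then pmf (map_pmf (\<lambda>k. enc k x) pk) c else 0)" for x'
  proof -
    have "bind_pmf pk (\<lambda>k. return_pmf (enc k x', x')) = map_pmf (\<lambda>k. (enc k x', x')) pk"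
      by (simp add: map_pmf_def)
    then show ?thesis by (auto simp: pmf_map vimage_def)
  qed
  have "pmf (cs_pmf px pk enc) (c, x) = (\<Sum>x'\<in>set_pmf px. pmf px x' * (if x' = x then pmf (map_pmf (\<lambda>k. enc k x) pk) c else 0))"
    unfolding cs_pmf_def using assms by (simp add: pmf_bind_finite inner)
  also have "\<dots> = (if x \<in> set_pmf px then pmf px x * pmf (map_pmf (\<lambda>k. enc k x) pk) c else 0)"
    using assms by (simp add: if_distrib[of "\<lambda>v. pmf px _ * v"] sum.delta cong: if_cong)
  also have "\<dots> = pmf px x * pmf (map_pmf (\<lambda>k. enc k x) pk) c"
    by (auto simp: set_pmf_eq)
  finally show ?thesis .
qed

lemma mi_cs_pmf:
  assumes fx: "finite (set_pmf px)" and fk: "finite (set_pmf pk)"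
  shows "mutual_info_pmf (cs_pmf px pk enc) =
    Exp px (\<lambda>x. Exp pk (\<lambda>k. log 2 (pmf (map_pmf (\<lambda>k. enc k x) pk) (enc k x) /
                                  pmf (map_pmf fst (cs_pmf px pk enc)) (enc k x))))"
proof -
  let ?q = "cs_pmf px pk enc"
  let ?W = "map_pmf fst ?q"
  let ?f = "\<lambda>z. log 2 (pmf ?q z / (pmf ?W (fst z) * pmf (map_pmf snd ?q) (snd z)))"
  have "mutual_info_pmf ?q = Exp ?q ?f" by (simp add: mutual_info_pmf_def Exp_def)
  also have "\<dots> = Exp px (\<lambda>x. Exp pk (\<lambda>k. ?f (enc k x, x)))"
    unfolding cs_pmf_def using fx fk
    by (simp add: Exp_bind set_bind_pmf)
  also have "\<dots> = Exp px (\<lambda>x. Exp pk (\<lambda>k. log 2 (pmf (map_pmf (\<lambda>k. enc k x) pk) (enc k x) /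
                                  pmf ?W (enc k x))))"
  proof (intro Exp_cong)
    fix x k assume x: "x \<in> set_pmf px" and k: "k \<in> set_pmf pk"
    have "pmf px x > 0" using x by (simp add: pmf_positive)
    then show "?f (enc k x, x) = log 2 (pmf (map_pmf (\<lambda>k. enc k x) pk) (enc k x) / pmf ?W (enc k x))"
      using fx by (simp add: pmf_cs_pmf map_snd_cs_pmf)
  qed
  finally show ?thesis .
qed



lemma packing:
  fixes \<rho> :: "'j pmf" and \<mu> :: "'y pmf" and \<pi> :: "'x \<Rightarrow> 'y" and f :: "'j \<Rightarrow> 'x \<Rightarrow> 'd"
  assumes fE: "finite E"
   and inj: "\<And>x x' j. x\<in>E \<Longrightarrow> x'\<in>E \<Longrightarrow> j \<in> set_pmf \<rho> \<Longrightarrow> \<pi> x = \<pi> x' \<Longrightarrow> f j x = d \<Longrightarrow> f j x' = d \<Longrightarrow> x = x'"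
  shows "(\<Sum>x\<in>E. pmf \<mu> (\<pi> x) * measure_pmf.prob \<rho> {j. f j x = d}) \<le> 1"
proof -
  let ?M = "\<lambda>x. measure_pmf.prob \<rho> {j. f j x = d}"
  have "(\<Sum>x\<in>E. pmf \<mu> (\<pi> x) * ?M x) = (\<Sum>y\<in>\<pi>`E. \<Sum>x\<in>{x\<in>E. \<pi> x = y}. pmf \<mu> (\<pi> x) * ?M x)"
    using fE by (rule sum.image_gen)
  also have "\<dots> = (\<Sum>y\<in>\<pi>`E. pmf \<mu> y * (\<Sum>x\<in>{x\<in>E. \<pi> x = y}. ?M x))"
    by (simp add: sum_distrib_left)
  also have "\<dots> \<le> (\<Sum>y\<in>\<pi>`E. pmf \<mu> y * 1)"
  proof (intro sum_mono mult_left_mono)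
    fix y assume "y \<in> \<pi>`E"
    let ?Ey = "{x\<in>E. \<pi> x = y}"
    let ?A = "\<lambda>x. {j. f j x = d} \<inter> set_pmf \<rho>"
    have "(\<Sum>x\<in>?Ey. ?M x) = (\<Sum>x\<in>?Ey. measure_pmf.prob \<rho> (?A x))"
      by (simp add: measure_Int_set_pmf)
    also have "\<dots> = measure_pmf.prob \<rho> (\<Union>x\<in>?Ey. ?A x)"
    proof (rule measure_finite_Union[symmetric])
      show "finite ?Ey" using fE by simp
      show "disjoint_family_on ?A ?Ey"
        unfolding disjoint_family_on_def using inj by blast
    qed (auto simp: measure_pmf.emeasure_eq_measure)
    also have "\<dots> \<le> 1" by simp
    finally show "(\<Sum>x\<in>?Ey. ?M x) \<le> 1" .
  qed simp
  also have "\<dots> = measure_pmf.prob \<mu> (\<pi>`E)"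
    using fE by (simp add: measure_measure_pmf_finite)
  also have "\<dots> \<le> 1" by simp
  finally show ?thesis .
qed



lemma pmf_le_pmf_map: "pmf p j \<le> pmf (map_pmf g p) (g j)"
proof -
  have "pmf p j = measure_pmf.prob p {j}" by (simp add: measure_pmf_single)
  also have "\<dots> \<le> measure_pmf.prob p (g -` {g j})" by (rule measure_pmf.finite_measure_mono) auto
  also have "\<dots> = pmf (map_pmf g p) (g j)" by (simp add: pmf_map)
  finally show ?thesis .
qed

lemma log3: "0<u \<Longrightarrow> 0<v \<Longrightarrow> 0<w \<Longrightarrow> log 2 (u * v / w) = log 2 u + log 2 v - log 2 (w::real)"
  by (simp add: log_mult log_divide)

lemma one_shot:
  fixes px :: "'x pmf" and pk :: "'k pmf" and enc :: "'k \<Rightarrow> 'x \<Rightarrow> 'c"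
    and \<kappa> :: "'k \<Rightarrow> 'j" and \<pi> :: "'x \<Rightarrow> 'y" and lam :: "'c \<Rightarrow> 'd" and e' :: "'j \<Rightarrow> 'x \<Rightarrow> 'd"
  assumes fx: "finite (set_pmf px)" and fk: "finite (set_pmf pk)"
    and E: "E \<subseteq> set_pmf px" and Ppos: "0 < measure_pmf.prob px E"
    and lam: "\<And>x k. x \<in> set_pmf px \<Longrightarrow> k \<in> set_pmf pk \<Longrightarrow> lam (enc k x) = e' (\<kappa> k) x"
    and inj: "\<And>x x' k. x \<in> E \<Longrightarrow> x' \<in> E \<Longrightarrow> k \<in> set_pmf pk \<Longrightarrow> \<pi> x = \<pi> x' \<Longrightarrow> e' (\<kappa> k) x = e' (\<kappa> k) x' \<Longrightarrow> x = x'"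
  shows "(\<Sum>x\<in>E. pmf px x * log 2 (measure_pmf.prob px E * pmf (map_pmf \<pi> px) (\<pi> x) / pmf px x))
           \<le> measure_pmf.prob px E * entropy_pmf (map_pmf \<kappa> pk) + mutual_info_pmf (cs_pmf px pk enc)"
proof -
  define P where "P = measure_pmf.prob px E"
  define q where "q = cs_pmf px pk enc"
  define W where "W = map_pmf fst q"
  define m where "m = (\<lambda>x. map_pmf (\<lambda>k. enc k x) pk)"
  define \<rho> where "\<rho> = map_pmf \<kappa> pk"
  define \<mu> where "\<mu> = map_pmf \<pi> px"
  define s where "s = (\<lambda>x. map_pmf (\<lambda>j. e' j x) \<rho>)"
  define Ix where "Ix = (\<lambda>x. Exp pk (\<lambda>k. log 2 (pmf (m x) (enc k x) / pmf W (enc k x))))"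
  let ?K = "set_pmf pk"
  have fE: "finite E" using E fx finite_subset by blast
  have PE: "P = (\<Sum>x\<in>E. pmf px x)" unfolding P_def using fE measure_measure_pmf_finite by blast
  have Ppos': "0 < P" using Ppos by (simp add: P_def)
  have I: "mutual_info_pmf q = Exp px Ix" unfolding q_def Ix_def W_def m_def by (rule mi_cs_pmf[OF fx fk])
  have setW: "enc k x \<in> set_pmf W" if "x \<in> set_pmf px" "k \<in> ?K" for x k
    using that unfolding W_def q_def set_map_pmf set_cs_pmf by force
  have finW: "finite (set_pmf W)" unfolding W_def q_def using finite_cs_pmf[OF fx fk, of enc] by simp
  have pos_x: "0 < pmf px x" if "x \<in> set_pmf px" for x using that by (simp add: pmf_positive)
  have pos_k: "0 < pmf pk k" if "k \<in> ?K" for k using that by (simp add: pmf_positive)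
  have pos_m: "0 < pmf (m x) (enc k x)" if "k \<in> ?K" for x k using that by (simp add: pmf_positive m_def)
  have pos_W: "0 < pmf W (enc k x)" if "x \<in> set_pmf px" "k \<in> ?K" for x k using setW[OF that] by (simp add: pmf_positive)
  have pos_rho: "0 < pmf \<rho> (\<kappa> k)" if "k \<in> ?K" for k using that by (simp add: pmf_positive \<rho>_def)
  have pos_mu: "0 < pmf \<mu> (\<pi> x)" if "x \<in> set_pmf px" for x using that by (simp add: pmf_positive \<mu>_def)
  have setm: "set_pmf (m x) \<subseteq> set_pmf W" if "x \<in> set_pmf px" for x
    using setW[OF that] by (auto simp: m_def)
  have finm: "finite (set_pmf (m x))" for x using fk by (simp add: m_def)
  have sumW: "(\<Sum>c\<in>set_pmf W. pmf W c) = 1" using finW by (simp add: sum_pmf_eq_1)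

  have Exp_m: "Exp pk (\<lambda>k. F (enc k x) / pmf (m x) (enc k x)) = (\<Sum>c\<in>set_pmf (m x). F c)" for F x
  proof -
    have "Exp pk (\<lambda>k. F (enc k x) / pmf (m x) (enc k x)) = Exp (m x) (\<lambda>c. F c / pmf (m x) c)"
      unfolding m_def using fk by (simp add: Exp_map)
    also have "\<dots> = (\<Sum>c\<in>set_pmf (m x). F c)"
      unfolding Exp_def by (intro sum.cong) (auto simp: set_pmf_eq)
    finally show ?thesis .
  qed

  have Ix_nonneg: "0 \<le> Ix x" if x: "x \<in> set_pmf px" for x
  proof -
    let ?b = "\<lambda>k. pmf pk k * pmf W (enc k x) / pmf (m x) (enc k x)"
    have "Ix x = (\<Sum>k\<in>?K. pmf pk k * log 2 (pmf pk k / ?b k))"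
      unfolding Ix_def Exp_def
    proof (intro sum.cong refl arg_cong2[where f="(*)"])
      fix k assume k: "k \<in> ?K"
      show "log 2 (pmf (m x) (enc k x) / pmf W (enc k x)) = log 2 (pmf pk k / ?b k)"
        using pos_k[OF k] by (simp add: field_simps)
    qed
    also have "0 \<le> \<dots>"
    proof (rule gibbs)
      have "sum ?b ?K = Exp pk (\<lambda>k. pmf W (enc k x) / pmf (m x) (enc k x))"
        by (simp add: Exp_def)
      also have "\<dots> = (\<Sum>c\<in>set_pmf (m x). pmf W c)" by (rule Exp_m)
      also have "\<dots> \<le> (\<Sum>c\<in>set_pmf W. pmf W c)"
        using setm[OF x] finW by (intro sum_mono2) auto
      also have "\<dots> = sum (pmf pk) ?K" using fk sumW by (simp add: sum_pmf_eq_1)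
      finally show "sum ?b ?K \<le> sum (pmf pk) ?K" .
    qed (use fk pos_m pos_W x in \<open>auto intro!: divide_pos_pos\<close>)
    finally show ?thesis .
  qed
  have IE: "(\<Sum>x\<in>E. pmf px x * Ix x) \<le> Exp px Ix"
    unfolding Exp_def using E fx Ix_nonneg by (intro sum_mono2) auto

  have H: "entropy_pmf \<rho> = Exp pk (\<lambda>k. - log 2 (pmf \<rho> (\<kappa> k)))"
  proof -
    have "entropy_pmf \<rho> = Exp \<rho> (\<lambda>j. - log 2 (pmf \<rho> j))"
      by (simp add: entropy_pmf_def Exp_def sum_negf)
    also have "\<dots> = Exp pk (\<lambda>k. - log 2 (pmf \<rho> (\<kappa> k)))"
      unfolding \<rho>_def using fk by (simp add: Exp_map)
    finally show ?thesis .
  qed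

  define a where "a = (\<lambda>(x,k). pmf px x * pmf pk k)"
  define b where "b = (\<lambda>(x,k). pmf pk k * pmf W (enc k x) * P * pmf \<rho> (\<kappa> k) * pmf \<mu> (\<pi> x) / pmf (m x) (enc k x))"

  have inner: "(\<Sum>k\<in>?K. pmf pk k * pmf W (enc k x) * pmf \<rho> (\<kappa> k) / pmf (m x) (enc k x))
      \<le> (\<Sum>c\<in>set_pmf W. pmf W c * pmf (s x) (lam c))" if x: "x \<in> E" for x
  proof -
    have xS: "x \<in> set_pmf px" using x E by auto
    have "(\<Sum>k\<in>?K. pmf pk k * pmf W (enc k x) * pmf \<rho> (\<kappa> k) / pmf (m x) (enc k x))
        \<le> (\<Sum>k\<in>?K. pmf pk k * (pmf W (enc k x) * pmf (s x) (lam (enc k x)) / pmf (m x) (enc k x)))"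
    proof (intro sum_mono)
      fix k assume k: "k \<in> ?K"
      have "pmf \<rho> (\<kappa> k) \<le> pmf (s x) (lam (enc k x))"
        unfolding s_def lam[OF xS k] by (rule pmf_le_pmf_map)
      then show "pmf pk k * pmf W (enc k x) * pmf \<rho> (\<kappa> k) / pmf (m x) (enc k x)
          \<le> pmf pk k * (pmf W (enc k x) * pmf (s x) (lam (enc k x)) / pmf (m x) (enc k x))"
        using pos_k[OF k] pos_W[OF xS k] pos_m[OF k]
        by (simp add: divide_right_mono mult_left_mono)
    qed
    also have "\<dots> = (\<Sum>c\<in>set_pmf (m x). pmf W c * pmf (s x) (lam c))"
      using Exp_m[of "\<lambda>c. pmf W c * pmf (s x) (lam c)" x] by (simp add: Exp_def)
    also have "\<dots> \<le> (\<Sum>c\<in>set_pmf W. pmf W c * pmf (s x) (lam c))"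
      using setm[OF xS] finW by (intro sum_mono2) auto
    finally show ?thesis .
  qed

  have pack: "(\<Sum>x\<in>E. pmf \<mu> (\<pi> x) * pmf (s x) d) \<le> 1" for d
  proof -
    have "(\<Sum>x\<in>E. pmf \<mu> (\<pi> x) * pmf (s x) d) = (\<Sum>x\<in>E. pmf \<mu> (\<pi> x) * measure_pmf.prob \<rho> {j. e' j x = d})"
      by (simp add: s_def pmf_map vimage_def)
    also have "\<dots> \<le> 1"
    proof (rule packing[OF fE])
      fix x x' j assume "x \<in> E" "x' \<in> E" "j \<in> set_pmf \<rho>" "\<pi> x = \<pi> x'" "e' j x = d" "e' j x' = d"
      then show "x = x'" using inj unfolding \<rho>_def by auto
    qed
    finally show ?thesis .
  qed

  have sum_b: "(\<Sum>t\<in>E\<times>?K. b t) \<le> P"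
  proof -
    have "(\<Sum>t\<in>E\<times>?K. b t) = (\<Sum>x\<in>E. P * pmf \<mu> (\<pi> x) *
        (\<Sum>k\<in>?K. pmf pk k * pmf W (enc k x) * pmf \<rho> (\<kappa> k) / pmf (m x) (enc k x)))"
      unfolding sum.cartesian_product[symmetric] b_def
      by (simp add: sum_distrib_left algebra_simps)
    also have "\<dots> \<le> (\<Sum>x\<in>E. P * pmf \<mu> (\<pi> x) * (\<Sum>c\<in>set_pmf W. pmf W c * pmf (s x) (lam c)))"
      using inner Ppos' by (intro sum_mono mult_left_mono) auto
    also have "\<dots> = P * (\<Sum>c\<in>set_pmf W. pmf W c * (\<Sum>x\<in>E. pmf \<mu> (\<pi> x) * pmf (s x) (lam c)))"
      by (simp add: sum_distrib_left algebra_simps sum.swap[of _ E])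
    also have "\<dots> \<le> P * (\<Sum>c\<in>set_pmf W. pmf W c * 1)"
      using pack Ppos' by (intro mult_left_mono sum_mono) auto
    also have "\<dots> = P" using sumW by simp
    finally show ?thesis .
  qed
  have sumK: "(\<Sum>k\<in>?K. pmf pk k) = 1" using fk by (simp add: sum_pmf_eq_1)
  have sum_a: "(\<Sum>t\<in>E\<times>?K. a t) = P"
    unfolding a_def sum.cartesian_product[symmetric] PE
    by (simp add: sum_distrib_left[symmetric] sumK)
  have gib: "0 \<le> (\<Sum>t\<in>E\<times>?K. a t * log 2 (a t / b t))"
  proof (rule gibbs)
    show "finite (E \<times> ?K)" using fE fk by simp
    show "sum b (E \<times> ?K) \<le> sum a (E \<times> ?K)" using sum_b sum_a by simp
  next
    fix t assume t: "t \<in> E \<times> ?K"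
    then obtain x k where xk: "t = (x, k)" "x \<in> set_pmf px" "k \<in> ?K" using E by auto
    show "0 \<le> a t" unfolding a_def xk by simp
    show "0 < b t" unfolding b_def xk using pos_k[OF xk(3)] pos_W[OF xk(2,3)] Ppos' pos_rho[OF xk(3)]
        pos_mu[OF xk(2)] pos_m[OF xk(3)] by simp
    then show "0 \<le> b t" by simp
  qed
  have termeq: "log 2 (a (x,k) / b (x,k)) = log 2 (pmf (m x) (enc k x) / pmf W (enc k x))
      + log 2 (pmf px x / (P * pmf \<mu> (\<pi> x))) - log 2 (pmf \<rho> (\<kappa> k))"
    if x: "x \<in> set_pmf px" and k: "k \<in> ?K" for x k
  proof -
    note p = pos_k[OF k] pos_W[OF x k] Ppos' pos_rho[OF k] pos_mu[OF x] pos_m[OF k] pos_x[OF x]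
    have "a (x,k) / b (x,k) = (pmf (m x) (enc k x) / pmf W (enc k x)) * (pmf px x / (P * pmf \<mu> (\<pi> x))) / pmf \<rho> (\<kappa> k)"
      unfolding a_def b_def using p by (simp add: field_simps)
    moreover have "0 < pmf (m x) (enc k x) / pmf W (enc k x)" "0 < pmf px x / (P * pmf \<mu> (\<pi> x))"
      using p by simp_all
    ultimately show ?thesis using p(4) log3 by metis
  qed
  have expand: "(\<Sum>t\<in>E\<times>?K. a t * log 2 (a t / b t)) = (\<Sum>x\<in>E. pmf px x * Ix x)
      + (\<Sum>x\<in>E. pmf px x * log 2 (pmf px x / (P * pmf \<mu> (\<pi> x)))) + P * entropy_pmf \<rho>"
  proof -
    have "(\<Sum>t\<in>E\<times>?K. a t * log 2 (a t / b t)) = (\<Sum>x\<in>E. \<Sum>k\<in>?K. a (x,k) * log 2 (a (x,k) / b (x,k)))"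
      by (simp add: sum.cartesian_product)
    also have "\<dots> = (\<Sum>x\<in>E. pmf px x * (Ix x + log 2 (pmf px x / (P * pmf \<mu> (\<pi> x))) + entropy_pmf \<rho>))"
    proof (intro sum.cong refl)
      fix x assume x: "x \<in> E"
      then have xS: "x \<in> set_pmf px" using E by auto
      have "(\<Sum>k\<in>?K. a (x,k) * log 2 (a (x,k) / b (x,k))) = (\<Sum>k\<in>?K. pmf px x * (
          pmf pk k * log 2 (pmf (m x) (enc k x) / pmf W (enc k x))
          + pmf pk k * log 2 (pmf px x / (P * pmf \<mu> (\<pi> x))) + pmf pk k * (- log 2 (pmf \<rho> (\<kappa> k)))))"
      proof (intro sum.cong refl)
        fix k assume k: "k \<in> ?K"
        show "a (x,k) * log 2 (a (x,k) / b (x,k)) = pmf px x * (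
          pmf pk k * log 2 (pmf (m x) (enc k x) / pmf W (enc k x))
          + pmf pk k * log 2 (pmf px x / (P * pmf \<mu> (\<pi> x))) + pmf pk k * (- log 2 (pmf \<rho> (\<kappa> k))))"
          unfolding termeq[OF xS k] by (simp add: a_def algebra_simps)
      qed
      also have "\<dots> = pmf px x * (Ix x + log 2 (pmf px x / (P * pmf \<mu> (\<pi> x))) * (\<Sum>k\<in>?K. pmf pk k) + entropy_pmf \<rho>)"
      proof -
        have e1: "(\<Sum>k\<in>?K. pmf pk k * log 2 (pmf (m x) (enc k x) / pmf W (enc k x))) = Ix x"
          by (simp add: Ix_def Exp_def)
        have e2: "(\<Sum>k\<in>?K. pmf pk k * log 2 (pmf px x / (P * pmf \<mu> (\<pi> x)))) =
            log 2 (pmf px x / (P * pmf \<mu> (\<pi> x))) * (\<Sum>k\<in>?K. pmf pk k)"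
          by (simp add: sum_distrib_right mult.commute)
        have e3: "(\<Sum>k\<in>?K. pmf pk k * (- log 2 (pmf \<rho> (\<kappa> k)))) = entropy_pmf \<rho>"
          by (simp add: H Exp_def)
        show ?thesis
          unfolding sum_distrib_left[symmetric] sum.distrib e1 e2 e3 ..
      qed
      finally show "(\<Sum>k\<in>?K. a (x,k) * log 2 (a (x,k) / b (x,k))) =
          pmf px x * (Ix x + log 2 (pmf px x / (P * pmf \<mu> (\<pi> x))) + entropy_pmf \<rho>)"
        using sumK by simp
    qed
    also have "\<dots> = (\<Sum>x\<in>E. pmf px x * Ix x)
      + (\<Sum>x\<in>E. pmf px x * log 2 (pmf px x / (P * pmf \<mu> (\<pi> x)))) + P * entropy_pmf \<rho>"
      unfolding PE by (simp add: sum.distrib sum_distrib_right sum_distrib_left algebra_simps)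
    finally show ?thesis .
  qed
  have neg: "(\<Sum>x\<in>E. pmf px x * log 2 (P * pmf \<mu> (\<pi> x) / pmf px x))
      = - (\<Sum>x\<in>E. pmf px x * log 2 (pmf px x / (P * pmf \<mu> (\<pi> x))))"
  proof -
    have "(\<Sum>x\<in>E. pmf px x * log 2 (P * pmf \<mu> (\<pi> x) / pmf px x))
      = (\<Sum>x\<in>E. - (pmf px x * log 2 (pmf px x / (P * pmf \<mu> (\<pi> x)))))"
    proof (intro sum.cong refl)
      fix x assume "x \<in> E"
      then have xS: "x \<in> set_pmf px" using E by auto
      show "pmf px x * log 2 (P * pmf \<mu> (\<pi> x) / pmf px x) = - (pmf px x * log 2 (pmf px x / (P * pmf \<mu> (\<pi> x))))"
        using pos_x[OF xS] pos_mu[OF xS] Ppos' by (simp add: log_divide log_mult algebra_simps)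
    qed
    then show ?thesis by (simp add: sum_negf)
  qed
  show ?thesis
    using gib expand IE I neg unfolding P_def[symmetric] \<mu>_def[symmetric] \<rho>_def[symmetric] q_def[symmetric]
    by linarith
qed



lemma replicate_pmf_Suc_pair:
  "replicate_pmf (Suc n) q = map_pmf (\<lambda>(x,xs). x#xs) (pair_pmf q (replicate_pmf n q))"
  by (simp add: pair_pmf_def map_bind_pmf)

lemma inj_Cons_pair: "inj (\<lambda>(x::'a, xs). x#xs)"
  by (auto simp: inj_def)

lemma prod_Cons_nth: "(\<Prod>i<Suc n. f ((x#xs)!i)) = f x * (\<Prod>i<n. f (xs!i))"
  by (subst prod.lessThan_Suc_shift) simp

lemma pmf_replicate:
  "pmf (replicate_pmf n q) xs = (if length xs = n then (\<Prod>i<n. pmf q (xs!i)) else 0)"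
proof (induction n arbitrary: xs)
  case 0
  then show ?case by (cases xs) auto
next
  case (Suc n)
  show ?case
  proof (cases xs)
    case Nil
    then show ?thesis unfolding replicate_pmf_Suc_pair pmf_map by (simp add: vimage_def case_prod_beta)
  next
    case (Cons y ys)
    have "pmf (replicate_pmf (Suc n) q) xs = pmf (pair_pmf q (replicate_pmf n q)) (y, ys)"
      unfolding replicate_pmf_Suc_pair Cons
      using pmf_map_inj'[OF inj_Cons_pair, of "pair_pmf q (replicate_pmf n q)" "(y, ys)"] by simp
    also have "\<dots> = pmf q y * pmf (replicate_pmf n q) ys" by (simp add: pmf_pair)
    finally show ?thesis using Suc.IH[of ys] Cons by (simp add: prod_Cons_nth del: prod.lessThan_Suc)
  qed
qed

lemma finite_set_replicate_pmf: "finite (set_pmf q) \<Longrightarrow> finite (set_pmf (replicate_pmf n q))"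
  unfolding set_replicate_pmf lists_eq_set
  by (rule finite_subset[OF _ finite_lists_length_eq[of "set_pmf q" n]]) auto

lemma map_replicate_pmf: "map_pmf (map f) (replicate_pmf n q) = replicate_pmf n (map_pmf f q)"
proof (induction n)
  case (Suc n)
  show ?case by (simp add: map_bind_pmf bind_map_pmf flip: Suc.IH)
qed simp

lemma inj_unzip: "inj (\<lambda>zs. (map fst zs, map snd zs))"
proof (intro injI)
  fix x y :: "('a \<times> 'b) list" assume "(map fst x, map snd x) = (map fst y, map snd y)"
  then have "zip (map fst x) (map snd x) = zip (map fst y) (map snd y)" by simp
  then show "x = y" by (simp add: zip_map_fst_snd)
qed

lemma finite_set_block: "finite (set_pmf p) \<Longrightarrow> finite (set_pmf (block_pmf n p))"
  unfolding block_pmf_def by (simp add: finite_set_replicate_pmf)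

lemma set_block_len: "(xs, ys) \<in> set_pmf (block_pmf n p) \<Longrightarrow> length xs = n \<and> length ys = n"
  unfolding block_pmf_def by (auto simp: set_replicate_pmf)

lemma pmf_block:
  assumes "length xs = n" "length ys = n"
  shows "pmf (block_pmf n p) (xs, ys) = (\<Prod>i<n. pmf p (xs!i, ys!i))"
proof -
  have e: "(xs, ys) = (\<lambda>zs. (map fst zs, map snd zs)) (zip xs ys)" using assms by simp
  have "pmf (block_pmf n p) (xs, ys) = pmf (replicate_pmf n p) (zip xs ys)"
    unfolding block_pmf_def by (subst e) (rule pmf_map_inj'[OF inj_unzip])
  also have "\<dots> = (\<Prod>i<n. pmf p (xs!i, ys!i))"
    using assms by (simp add: pmf_replicate)
  finally show ?thesis .
qed

lemma map_fst_block: "map_pmf fst (block_pmf n p) = replicate_pmf n (map_pmf fst p)"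
  unfolding block_pmf_def by (simp add: map_pmf_comp map_replicate_pmf[symmetric])

lemma map_snd_block: "map_pmf snd (block_pmf n p) = replicate_pmf n (map_pmf snd p)"
  unfolding block_pmf_def by (simp add: map_pmf_comp map_replicate_pmf[symmetric])

lemma entropy_Exp: "entropy_pmf p = Exp p (\<lambda>x. - log 2 (pmf p x))"
  by (simp add: entropy_pmf_def Exp_def sum_negf)

lemma entropy_map_inj: "finite (set_pmf p) \<Longrightarrow> inj f \<Longrightarrow> entropy_pmf (map_pmf f p) = entropy_pmf p"
  by (simp add: entropy_Exp Exp_map pmf_map_inj')

lemma Exp_rep_Suc:
  assumes "finite (set_pmf q)"
  shows "Exp (replicate_pmf (Suc n) q) F = Exp q (\<lambda>x. Exp (replicate_pmf n q) (\<lambda>xs. F (x#xs)))"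
proof -
  have fr: "finite (set_pmf (replicate_pmf n q))" using assms by (rule finite_set_replicate_pmf)
  have "Exp (replicate_pmf (Suc n) q) F = Exp (bind_pmf q (\<lambda>x. bind_pmf (replicate_pmf n q) (\<lambda>xs. return_pmf (x#xs)))) F"
    by (simp only: replicate_pmf.simps)
  also have "\<dots> = Exp q (\<lambda>x. Exp (bind_pmf (replicate_pmf n q) (\<lambda>xs. return_pmf (x#xs))) F)"
    by (rule Exp_bind[OF assms]) (use fr in \<open>simp add: set_bind_pmf\<close>)
  also have "\<dots> = Exp q (\<lambda>x. Exp (replicate_pmf n q) (\<lambda>xs. F (x#xs)))"
    by (subst Exp_bind[OF fr]) simp_all
  finally show ?thesis .
qed

lemma entropy_replicate:
  assumes "finite (set_pmf q)"
  shows "entropy_pmf (replicate_pmf n q) = real n * entropy_pmf q"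
proof (induction n)
  case 0
  then show ?case by (simp add: entropy_Exp)
next
  case (Suc n)
  have fr: "finite (set_pmf (replicate_pmf n q))" using assms by (rule finite_set_replicate_pmf)
  have "entropy_pmf (replicate_pmf (Suc n) q) =
      Exp q (\<lambda>x. Exp (replicate_pmf n q) (\<lambda>xs. - log 2 (pmf (replicate_pmf (Suc n) q) (x#xs))))"
    by (rule trans[OF entropy_Exp Exp_rep_Suc[OF assms]])
  also have "\<dots> = Exp q (\<lambda>x. Exp (replicate_pmf n q) (\<lambda>xs. - log 2 (pmf q x) + - log 2 (pmf (replicate_pmf n q) xs)))"
  proof (intro Exp_cong)
    fix x xs assume x: "x \<in> set_pmf q" and xs: "xs \<in> set_pmf (replicate_pmf n q)"
    have "pmf (replicate_pmf (Suc n) q) (x#xs) = pmf q x * pmf (replicate_pmf n q) xs"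
      using pmf_replicate[of "Suc n" q "x#xs"] pmf_replicate[of n q xs] xs
      by (simp add: set_replicate_pmf prod_Cons_nth del: replicate_pmf.simps prod.lessThan_Suc)
    then show "- log 2 (pmf (replicate_pmf (Suc n) q) (x#xs)) = - log 2 (pmf q x) + - log 2 (pmf (replicate_pmf n q) xs)"
      using pmf_positive[OF x] pmf_positive[OF xs] by (simp add: log_mult del: replicate_pmf.simps)
  qed
  also have "\<dots> = entropy_pmf q + entropy_pmf (replicate_pmf n q)"
    by (simp only: Exp_add Exp_const[OF fr] Exp_const[OF assms] entropy_Exp[symmetric])
  finally show ?case using Suc.IH by (simp add: algebra_simps)
qed

lemma entropy_block:
  "finite (set_pmf p) \<Longrightarrow> entropy_pmf (block_pmf n p) = real n * entropy_pmf p"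
  unfolding block_pmf_def by (simp add: entropy_map_inj inj_unzip finite_set_replicate_pmf entropy_replicate)



lemma sum_Cons_nth: "(\<Sum>i<Suc n. f ((x#xs)!i)) = f x + (\<Sum>i<n. f (xs!i))"
  by (subst sum.lessThan_Suc_shift) simp

lemma Exp_rep_sum:
  assumes "finite (set_pmf q)"
  shows "Exp (replicate_pmf n q) (\<lambda>zs. \<Sum>i<n. h (zs!i)) = real n * Exp q h"
proof (induction n)
  case 0
  then show ?case by simp
next
  case (Suc n)
  have fr: "finite (set_pmf (replicate_pmf n q))" using assms by (rule finite_set_replicate_pmf)
  have "Exp (replicate_pmf (Suc n) q) (\<lambda>zs. \<Sum>i<Suc n. h (zs!i))
      = Exp q (\<lambda>x. Exp (replicate_pmf n q) (\<lambda>xs. h x + (\<Sum>i<n. h (xs!i))))"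
    unfolding Exp_rep_Suc[OF assms] sum_Cons_nth ..
  also have "\<dots> = Exp q (\<lambda>x. h x + real n * Exp q h)"
    by (simp only: Exp_add Exp_const[OF fr] Suc.IH)
  also have "\<dots> = Exp q h + real n * Exp q h"
    by (simp only: Exp_add Exp_const[OF assms])
  finally show ?case by (simp add: algebra_simps)
qed

lemma Exp_rep_sq:
  assumes "finite (set_pmf q)" and h0: "Exp q h = 0"
  shows "Exp (replicate_pmf n q) (\<lambda>zs. (\<Sum>i<n. h (zs!i))^2) = real n * Exp q (\<lambda>z. (h z)^2)"
proof (induction n)
  case 0
  then show ?case by simp
next
  case (Suc n)
  have fr: "finite (set_pmf (replicate_pmf n q))" using assms(1) by (rule finite_set_replicate_pmf)
  have "Exp (replicate_pmf (Suc n) q) (\<lambda>zs. (\<Sum>i<Suc n. h (zs!i))^2)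
      = Exp q (\<lambda>x. Exp (replicate_pmf n q) (\<lambda>xs. (h x)^2 + (2 * h x) * (\<Sum>i<n. h (xs!i)) + (\<Sum>i<n. h (xs!i))^2))"
    unfolding Exp_rep_Suc[OF assms(1)] sum_Cons_nth by (simp add: power2_eq_square algebra_simps)
  also have "\<dots> = Exp q (\<lambda>x. (h x)^2 + (2 * h x) * (real n * Exp q h) + real n * Exp q (\<lambda>z. (h z)^2))"
    by (simp only: Exp_add Exp_cmult Exp_const[OF fr] Suc.IH Exp_rep_sum[OF assms(1)])
  also have "\<dots> = Exp q (\<lambda>z. (h z)^2) + real n * Exp q (\<lambda>z. (h z)^2)"
    by (simp only: h0 Exp_add Exp_const[OF assms(1)]) (simp add: Exp_def)
  finally show ?case by (simp add: algebra_simps)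
qed

lemma chebyshev_pmf:
  assumes "finite (set_pmf M)" "0 < t"
  shows "measure_pmf.prob M {z. t \<le> \<bar>S z\<bar>} \<le> Exp M (\<lambda>z. (S z)^2) / t^2"
proof -
  let ?A = "{z. t \<le> \<bar>S z\<bar>}"
  have "measure_pmf.prob M ?A = measure_pmf.prob M (?A \<inter> set_pmf M)"
    by (simp add: measure_Int_set_pmf)
  also have "\<dots> = (\<Sum>z\<in>?A \<inter> set_pmf M. pmf M z)"
    using assms by (simp add: measure_measure_pmf_finite)
  also have "\<dots> \<le> (\<Sum>z\<in>?A \<inter> set_pmf M. pmf M z * ((S z)^2 / t^2))"
  proof (intro sum_mono)
    fix z assume "z \<in> ?A \<inter> set_pmf M"
    then have "t \<le> \<bar>S z\<bar>" by simp
    then have "t^2 \<le> (S z)^2" using assms(2)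
      by (metis abs_ge_zero abs_of_pos power2_abs power_mono)
    then have "1 \<le> (S z)^2 / t^2" using assms(2) by simp
    then show "pmf M z \<le> pmf M z * ((S z)^2 / t^2)"
      using mult_left_mono[of 1 "(S z)^2 / t^2" "pmf M z"] by simp
  qed
  also have "\<dots> \<le> (\<Sum>z\<in>set_pmf M. pmf M z * ((S z)^2 / t^2))"
    using assms by (intro sum_mono2) auto
  also have "\<dots> = Exp M (\<lambda>z. (S z)^2) / t^2"
    by (simp add: Exp_def sum_divide_distrib)
  finally show ?thesis .
qed

lemma aep_generic:
  assumes fq: "finite (set_pmf q)" and g: "0 < \<gamma>" and n: "0 < n"
  shows "measure_pmf.prob (replicate_pmf n q) {zs. \<gamma> < \<bar>(1 / real n) * (\<Sum>i<n. g (zs!i)) - Exp q g\<bar>}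
     \<le> Exp q (\<lambda>z. (g z - Exp q g)^2) / (real n * \<gamma>^2)"
proof -
  define m where "m = Exp q g"
  define h where "h = (\<lambda>z. g z - m)"
  have h0: "Exp q h = 0" unfolding h_def Exp_diff Exp_const[OF fq] m_def by simp
  have fr: "finite (set_pmf (replicate_pmf n q))" using fq by (rule finite_set_replicate_pmf)
  have sub: "{zs. \<gamma> < \<bar>(1 / real n) * (\<Sum>i<n. g (zs!i)) - m\<bar>} \<subseteq> {zs. real n * \<gamma> \<le> \<bar>\<Sum>i<n. h (zs!i)\<bar>}"
  proof
    fix zs assume "zs \<in> {zs. \<gamma> < \<bar>(1 / real n) * (\<Sum>i<n. g (zs!i)) - m\<bar>}"
    then have a: "\<gamma> < \<bar>(1 / real n) * (\<Sum>i<n. g (zs!i)) - m\<bar>" by simp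
    have "(\<Sum>i<n. h (zs!i)) = real n * ((1 / real n) * (\<Sum>i<n. g (zs!i)) - m)"
      unfolding h_def using n by (simp add: sum_subtractf algebra_simps)
    then have "\<bar>\<Sum>i<n. h (zs!i)\<bar> = real n * \<bar>(1 / real n) * (\<Sum>i<n. g (zs!i)) - m\<bar>"
      by (simp add: abs_mult)
    then show "zs \<in> {zs. real n * \<gamma> \<le> \<bar>\<Sum>i<n. h (zs!i)\<bar>}"
      using a n by simp
  qed
  have "measure_pmf.prob (replicate_pmf n q) {zs. \<gamma> < \<bar>(1 / real n) * (\<Sum>i<n. g (zs!i)) - m\<bar>}
      \<le> measure_pmf.prob (replicate_pmf n q) {zs. real n * \<gamma> \<le> \<bar>\<Sum>i<n. h (zs!i)\<bar>}"
    using sub by (intro measure_pmf.finite_measure_mono) auto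
  also have "\<dots> \<le> Exp (replicate_pmf n q) (\<lambda>zs. (\<Sum>i<n. h (zs!i))^2) / (real n * \<gamma>)^2"
    using n g by (intro chebyshev_pmf fr) simp
  also have "\<dots> = real n * Exp q (\<lambda>z. (h z)^2) / (real n * \<gamma>)^2"
    by (simp only: Exp_rep_sq[OF fq h0])
  also have "\<dots> = Exp q (\<lambda>z. (h z)^2) / (real n * \<gamma>^2)"
    using n by (simp add: power2_eq_square field_simps)
  finally show ?thesis unfolding h_def m_def .
qed



lemma log_prod2:
  assumes "finite I" "\<And>i. i \<in> I \<Longrightarrow> 0 < f i"
  shows "log 2 (\<Prod>i\<in>I. f i) = (\<Sum>i\<in>I. log 2 (f i))"
  using assms
proof (induction I rule: finite_induct)
  case (insert x F)
  have "0 < f x" "0 < prod f F" using insert.prems by (auto intro!: prod_pos)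
  then have "log 2 (f x * prod f F) = log 2 (f x) + log 2 (prod f F)" by (rule log_mult_pos)
  then show ?case using insert by simp
qed simp

lemma log_inv_prod:
  assumes "finite I" "\<And>i. i \<in> I \<Longrightarrow> 0 < f i"
  shows "log 2 (1 / (\<Prod>i\<in>I. f i)) = (\<Sum>i\<in>I. - log 2 (f i))"
proof -
  have "0 < (\<Prod>i\<in>I. f i)" using assms by (intro prod_pos) auto
  then have "log 2 (1 / (\<Prod>i\<in>I. f i)) = - log 2 (\<Prod>i\<in>I. f i)" by (simp add: log_divide)
  then show ?thesis using log_prod2[OF assms] by (simp add: sum_negf)
qed

lemma pmf_swap: "pmf (swap_pmf p) (b, a) = pmf p (a, b)"
proof -
  have inj: "inj (\<lambda>(a, b). (b, a))" by (auto simp: inj_def)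
  show ?thesis unfolding swap_pmf_def using pmf_map_inj'[OF inj, of p "(a, b)"] by simp
qed

lemma map_snd_swap: "map_pmf snd (swap_pmf p) = map_pmf fst p"
  unfolding swap_pmf_def map_pmf_comp by (simp add: case_prod_beta)

lemma typ_member:
  fixes pX :: "('a \<times> 'b) pmf"
  defines "g1 \<equiv> (\<lambda>z. - log 2 (pmf pX z / pmf (map_pmf snd pX) (snd z)))"
      and "g2 \<equiv> (\<lambda>z. - log 2 (pmf pX z / pmf (map_pmf fst pX) (fst z)))"
      and "g3 \<equiv> (\<lambda>z. - log 2 (pmf pX z))"
  assumes zs: "zs \<in> set_pmf (replicate_pmf n pX)"
    and b1: "\<bar>(1 / real n) * (\<Sum>i<n. g1 (zs!i)) - cond_entropy_pmf pX\<bar> \<le> \<gamma>"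
    and b2: "\<bar>(1 / real n) * (\<Sum>i<n. g2 (zs!i)) - cond_entropy_pmf (swap_pmf pX)\<bar> \<le> \<gamma>"
    and b3: "\<bar>(1 / real n) * (\<Sum>i<n. g3 (zs!i)) - entropy_pmf pX\<bar> \<le> \<gamma>"
  shows "(map fst zs, map snd zs) \<in> typ_set pX n \<gamma>"
proof -
  have len: "length zs = n" and inset: "\<And>i. i < n \<Longrightarrow> zs!i \<in> set_pmf pX"
    using zs by (auto simp: set_replicate_pmf)
  have p0: "0 < pmf pX (zs!i)" if "i < n" for i using inset[OF that] by (simp add: pmf_positive)
  have p1: "0 < pmf (map_pmf fst pX) (fst (zs!i))" if "i < n" for i
    using inset[OF that] by (simp add: pmf_positive)
  have p2: "0 < pmf (map_pmf snd pX) (snd (zs!i))" if "i < n" for i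
    using inset[OF that] by (simp add: pmf_positive)
  have e1: "log 2 (1 / cond_block_prob n pX (map fst zs) (map snd zs)) = (\<Sum>i<n. g1 (zs!i))"
  proof -
    have eq: "cond_block_prob n pX (map fst zs) (map snd zs) = (\<Prod>i<n. pmf pX (zs!i) / pmf (map_pmf snd pX) (snd (zs!i)))"
      unfolding cond_block_prob_def using len by (intro prod.cong) auto
    show ?thesis unfolding eq
      using p0 p2 by (subst log_inv_prod) (auto simp: g1_def)
  qed
  have e2: "log 2 (1 / cond_block_prob n (swap_pmf pX) (map snd zs) (map fst zs)) = (\<Sum>i<n. g2 (zs!i))"
  proof -
    have eq: "cond_block_prob n (swap_pmf pX) (map snd zs) (map fst zs) = (\<Prod>i<n. pmf pX (zs!i) / pmf (map_pmf fst pX) (fst (zs!i)))"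
      unfolding cond_block_prob_def using len by (intro prod.cong) (auto simp: pmf_swap map_snd_swap)
    show ?thesis unfolding eq
      using p0 p1 by (subst log_inv_prod) (auto simp: g2_def)
  qed
  have e3: "log 2 (1 / pmf (block_pmf n pX) (map fst zs, map snd zs)) = (\<Sum>i<n. g3 (zs!i))"
  proof -
    have eq: "pmf (block_pmf n pX) (map fst zs, map snd zs) = (\<Prod>i<n. pmf pX (zs!i))"
      using len by (simp add: pmf_block)
    show ?thesis unfolding eq
      using p0 by (subst log_inv_prod) (auto simp: g3_def)
  qed
  show ?thesis unfolding typ_set_def using len e1 e2 e3 b1 b2 b3 by simp
qed


lemma nu_le:
  fixes pX :: "('a::finite \<times> 'b::finite) pmf"
  assumes g: "0 < \<gamma>" and n: "0 < n"
  shows "nu pX n \<gamma> \<le>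
    (Exp pX (\<lambda>z. ((- log 2 (pmf pX z / pmf (map_pmf snd pX) (snd z))) - Exp pX (\<lambda>z. - log 2 (pmf pX z / pmf (map_pmf snd pX) (snd z))))^2)
   + Exp pX (\<lambda>z. ((- log 2 (pmf pX z / pmf (map_pmf fst pX) (fst z))) - Exp pX (\<lambda>z. - log 2 (pmf pX z / pmf (map_pmf fst pX) (fst z))))^2)
   + Exp pX (\<lambda>z. ((- log 2 (pmf pX z)) - Exp pX (\<lambda>z. - log 2 (pmf pX z)))^2)) / (real n * \<gamma>^2)"
proof -
  define g1 where "g1 = (\<lambda>z. - log 2 (pmf pX z / pmf (map_pmf snd pX) (snd z)))"
  define g2 where "g2 = (\<lambda>z. - log 2 (pmf pX z / pmf (map_pmf fst pX) (fst z)))"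
  define g3 where "g3 = (\<lambda>z. - log 2 (pmf pX z))"
  have fX: "finite (set_pmf pX)" by simp
  have m1: "Exp pX g1 = cond_entropy_pmf pX"
    by (simp add: g1_def Exp_def cond_entropy_pmf_def sum_negf)
  have m2: "Exp pX g2 = cond_entropy_pmf (swap_pmf pX)"
  proof -
    have "cond_entropy_pmf (swap_pmf pX) =
        Exp (swap_pmf pX) (\<lambda>w. - log 2 (pmf (swap_pmf pX) w / pmf (map_pmf snd (swap_pmf pX)) (snd w)))"
      by (simp add: Exp_def cond_entropy_pmf_def sum_negf)
    also have "\<dots> = Exp pX (\<lambda>z. - log 2 (pmf (swap_pmf pX) (snd z, fst z) / pmf (map_pmf snd (swap_pmf pX)) (fst z)))"
      unfolding swap_pmf_def[of pX] by (subst Exp_map[OF fX]) (simp add: case_prod_beta swap_pmf_def[symmetric])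
    also have "\<dots> = Exp pX g2"
      by (simp add: pmf_swap map_snd_swap g2_def)
    finally show ?thesis by simp
  qed
  have m3: "Exp pX g3 = entropy_pmf pX" by (simp add: g3_def entropy_Exp)
  let ?R = "replicate_pmf n pX"
  define B where "B = (\<lambda>(g :: 'a \<times> 'b \<Rightarrow> real) m. {zs :: ('a \<times> 'b) list. \<gamma> < \<bar>(1 / real n) * (\<Sum>i<n. g (zs!i)) - m\<bar>})"
  have sub: "((\<lambda>zs. (map fst zs, map snd zs)) -` (- typ_set pX n \<gamma>)) \<inter> set_pmf ?R
      \<subseteq> B g1 (Exp pX g1) \<union> B g2 (Exp pX g2) \<union> B g3 (Exp pX g3)"
  proof
    fix zs assume zs: "zs \<in> ((\<lambda>zs. (map fst zs, map snd zs)) -` (- typ_set pX n \<gamma>)) \<inter> set_pmf ?R"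
    show "zs \<in> B g1 (Exp pX g1) \<union> B g2 (Exp pX g2) \<union> B g3 (Exp pX g3)"
    proof (rule ccontr)
      assume "zs \<notin> B g1 (Exp pX g1) \<union> B g2 (Exp pX g2) \<union> B g3 (Exp pX g3)"
      then have nb: "zs \<notin> B g1 (cond_entropy_pmf pX) \<union> B g2 (cond_entropy_pmf (swap_pmf pX)) \<union> B g3 (entropy_pmf pX)"
        unfolding m1 m2 m3 .
      have "(map fst zs, map snd zs) \<in> typ_set pX n \<gamma>"
        using zs nb unfolding B_def g1_def g2_def g3_def
        by (intro typ_member) auto
      then show False using zs by auto
    qed
  qed
  have "nu pX n \<gamma> = measure_pmf.prob ?R ((\<lambda>zs. (map fst zs, map snd zs)) -` (- typ_set pX n \<gamma>))"
    by (simp add: nu_def block_pmf_def)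
  also have "\<dots> = measure_pmf.prob ?R (((\<lambda>zs. (map fst zs, map snd zs)) -` (- typ_set pX n \<gamma>)) \<inter> set_pmf ?R)"
    by (simp add: measure_Int_set_pmf)
  also have "\<dots> \<le> measure_pmf.prob ?R (B g1 (Exp pX g1) \<union> B g2 (Exp pX g2) \<union> B g3 (Exp pX g3))"
    using sub by (intro measure_pmf.finite_measure_mono) auto
  also have "\<dots> \<le> measure_pmf.prob ?R (B g1 (Exp pX g1)) + measure_pmf.prob ?R (B g2 (Exp pX g2))
      + measure_pmf.prob ?R (B g3 (Exp pX g3))"
  proof -
    have un: "measure_pmf.prob ?R (X \<union> Y) \<le> measure_pmf.prob ?R X + measure_pmf.prob ?R Y" for X Y
      by (rule measure_subadditive) (auto simp: measure_pmf.emeasure_eq_measure)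
    show ?thesis using un[of "B g1 (Exp pX g1) \<union> B g2 (Exp pX g2)" "B g3 (Exp pX g3)"]
        un[of "B g1 (Exp pX g1)" "B g2 (Exp pX g2)"] by linarith
  qed
  also have "\<dots> \<le> Exp pX (\<lambda>z. (g1 z - Exp pX g1)^2) / (real n * \<gamma>^2) + Exp pX (\<lambda>z. (g2 z - Exp pX g2)^2) / (real n * \<gamma>^2)
      + Exp pX (\<lambda>z. (g3 z - Exp pX g3)^2) / (real n * \<gamma>^2)"
    unfolding B_def by (intro add_mono aep_generic[OF fX g n])
  finally show ?thesis by (simp add: g1_def g2_def g3_def add_divide_distrib)
qed

lemma nu_eventually:
  fixes pX :: "('a::finite \<times> 'b::finite) pmf"
  assumes g: "0 < \<gamma>" and c: "0 < c"
  shows "\<exists>N. \<forall>n\<ge>N. nu pX n \<gamma> \<le> c"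
proof -
  obtain V where V: "\<And>n. 0 < n \<Longrightarrow> nu pX n \<gamma> \<le> V / (real n * \<gamma>^2)"
    using nu_le[OF g] by blast
  define C where "C = \<bar>V\<bar> / \<gamma>^2"
  have C0: "0 \<le> C" by (simp add: C_def)
  define N where "N = nat \<lceil>C / c\<rceil> + 1"
  show ?thesis
  proof (intro exI allI impI)
    fix n assume nN: "N \<le> n"
    then have n: "0 < n" by (simp add: N_def)
    have "C / c \<le> real (nat \<lceil>C / c\<rceil>)" by linarith
    then have "C / c < real n" using nN unfolding N_def by linarith
    then have Cn: "C < c * real n" using c by (simp add: field_simps)
    have "nu pX n \<gamma> \<le> V / (real n * \<gamma>^2)" using V[OF n] .
    also have "\<dots> \<le> C / real n"
      unfolding C_def using n g by (simp add: field_simps divide_right_mono)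
    also have "\<dots> \<le> c" using Cn n by (simp add: field_simps)
    finally show "nu pX n \<gamma> \<le> c" .
  qed
qed




lemma finish:
  fixes p \<mu> :: "'x \<Rightarrow> real"
  assumes fE: "finite E" and pp: "\<And>x. x \<in> E \<Longrightarrow> 0 < p x" and mp: "\<And>x. x \<in> E \<Longrightarrow> 0 < \<mu> x"
    and PE: "P = (\<Sum>x\<in>E. p x)" and t: "0 < t" "t \<le> P" and n: "0 < n" and \<delta>: "0 \<le> \<delta>"
    and tyb: "\<And>x. x \<in> E \<Longrightarrow> real n * (H - \<gamma>) \<le> log 2 (\<mu> x / p x)"
    and main: "(\<Sum>x\<in>E. p x * log 2 (P * \<mu> x / p x)) \<le> P * (real n * HK) + I" and I: "I \<le> \<delta>"
  shows "H \<le> HK + \<gamma> + (1 / real n) * (\<delta> / t + log 2 (1 / t))"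
proof -
  have P: "0 < P" using t by simp
  have "(\<Sum>x\<in>E. p x * log 2 (P * \<mu> x / p x)) = (\<Sum>x\<in>E. p x * log 2 P + p x * log 2 (\<mu> x / p x))"
  proof (intro sum.cong refl)
    fix x assume x: "x \<in> E"
    have "log 2 (P * \<mu> x / p x) = log 2 (P * (\<mu> x / p x))" by simp
    also have "\<dots> = log 2 P + log 2 (\<mu> x / p x)" using P pp[OF x] mp[OF x] by (intro log_mult_pos) auto
    finally show "p x * log 2 (P * \<mu> x / p x) = p x * log 2 P + p x * log 2 (\<mu> x / p x)"
      by (simp add: algebra_simps)
  qed
  also have "\<dots> = P * log 2 P + (\<Sum>x\<in>E. p x * log 2 (\<mu> x / p x))"
    by (simp add: sum.distrib PE sum_distrib_right)
  also have "\<dots> \<ge> P * log 2 P + (\<Sum>x\<in>E. p x * (real n * (H - \<gamma>)))"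
    using tyb pp by (intro add_left_mono sum_mono mult_left_mono) (auto intro: less_imp_le)
  finally have "P * log 2 P + P * (real n * (H - \<gamma>)) \<le> P * (real n * HK) + \<delta>"
    using main I by (simp add: PE sum_distrib_right)
  then have "P * (real n * (H - \<gamma>)) \<le> P * (real n * HK) + \<delta> - P * log 2 P" by linarith
  then have "real n * (H - \<gamma>) \<le> real n * HK + \<delta> / P - log 2 P"
    using P by (simp add: field_simps)
  moreover have "\<delta> / P \<le> \<delta> / t" using t \<delta> by (intro divide_left_mono) auto
  moreover have "- log 2 P \<le> log 2 (1 / t)"
    using t by (simp add: log_divide)
  ultimately have "real n * (H - \<gamma>) \<le> real n * HK + (\<delta> / t + log 2 (1 / t))" by linarith
  then have "H - \<gamma> \<le> HK + (\<delta> / t + log 2 (1 / t)) / real n"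
    using n by (simp add: field_simps)
  then show ?thesis by simp
qed



lemma typ_lower:
  assumes "0 < n" "\<bar>(1 / real n) * L - H\<bar> \<le> \<gamma>"
  shows "real n * (H - \<gamma>) \<le> L"
proof -
  have "H - \<gamma> \<le> (1 / real n) * L" using assms(2) by linarith
  then have "real n * (H - \<gamma>) \<le> real n * ((1 / real n) * L)" using assms(1) by (intro mult_left_mono) auto
  then show ?thesis using assms(1) by simp
qed

lemma prob_compl_pmf: "measure_pmf.prob p (- A) = 1 - measure_pmf.prob p A"
  using measure_pmf.prob_compl[of A p] by (simp add: Compl_eq_Diff_UNIV)

lemma per_n:
  fixes pX pK :: "('a::finite \<times> 'b::finite) pmf"
    and E1 :: "'a list \<Rightarrow> 'a list \<Rightarrow> nat" and E2 :: "'b list \<Rightarrow> 'b list \<Rightarrow> nat"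
  assumes sys: "is_system n C1 C2 E1 E2 Dec M1 M2 ph1 ph2 ps"
    and n: "0 < n" and err: "error_prob n pX ph1 ph2 ps \<le> \<epsilon>"
    and mi: "mutual_info_pmf (cipher_source_pmf n pX pK E1 E2) \<le> \<delta>"
    and tpos: "0 < 1 - nu_eps pX n \<gamma> \<epsilon>" and \<delta>: "0 \<le> \<delta>"
  shows "cond_entropy_pmf pX \<le> entropy_pmf (map_pmf fst pK) + \<gamma> + zeta pX n \<gamma> \<epsilon> \<delta> \<and>
         cond_entropy_pmf (swap_pmf pX) \<le> entropy_pmf (map_pmf snd pK) + \<gamma> + zeta pX n \<gamma> \<epsilon> \<delta> \<and>
         entropy_pmf pX \<le> entropy_pmf pK + \<gamma> + zeta pX n \<gamma> \<epsilon> \<delta>"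
proof -
  define px where "px = block_pmf n pX"
  define pk where "pk = block_pmf n pK"
  define enc where "enc = (\<lambda>(k::'a list \<times> 'b list) (x::'a list \<times> 'b list). (E1 (fst k) (fst x), E2 (snd k) (snd x)))"
  define D where "D = {x. ps (ph1 (fst x)) (ph2 (snd x)) = x}"
  define E where "E = set_pmf px \<inter> typ_set pX n \<gamma> \<inter> D"
  define P where "P = measure_pmf.prob px E"
  define t where "t = 1 - nu_eps pX n \<gamma> \<epsilon>"
  define MI where "MI = mutual_info_pmf (cs_pmf px pk enc)"
  have fx: "finite (set_pmf px)" unfolding px_def by (intro finite_set_block) simp
  have fk: "finite (set_pmf pk)" unfolding pk_def by (intro finite_set_block) simp
  have cs: "cipher_source_pmf n pX pK E1 E2 = cs_pmf px pk enc"
    by (simp add: cipher_source_pmf_def cs_pmf_def px_def pk_def enc_def case_prod_unfold)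
  have MI: "MI \<le> \<delta>" using mi cs by (simp add: MI_def)
  have ES: "E \<subseteq> set_pmf px" by (auto simp: E_def)
  have fE: "finite E" using ES fx finite_subset by blast
  have PE: "P = (\<Sum>x\<in>E. pmf px x)" unfolding P_def using fE measure_measure_pmf_finite by blast
  have tP: "t \<le> P"
  proof -
    have "P = measure_pmf.prob px (typ_set pX n \<gamma> \<inter> D)"
      unfolding P_def E_def using measure_Int_set_pmf[of px "typ_set pX n \<gamma> \<inter> D"]
      by (simp add: Int_commute Int_left_commute)
    moreover have "measure_pmf.prob px (- (typ_set pX n \<gamma> \<inter> D)) \<le>
        measure_pmf.prob px (- typ_set pX n \<gamma>) + measure_pmf.prob px (- D)"
      unfolding Compl_Int by (rule measure_subadditive) (auto simp: measure_pmf.emeasure_eq_measure)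
    moreover have "measure_pmf.prob px (- typ_set pX n \<gamma>) = nu pX n \<gamma>"
      by (simp add: nu_def px_def)
    moreover have "measure_pmf.prob px (- D) = error_prob n pX ph1 ph2 ps"
    proof -
      have "- D = {(x1, x2). ps (ph1 x1) (ph2 x2) \<noteq> (x1, x2)}" by (auto simp: D_def)
      then show ?thesis by (simp add: error_prob_def px_def)
    qed
    ultimately show ?thesis using err unfolding t_def nu_eps_def prob_compl_pmf by linarith
  qed
  have t0: "0 < t" using tpos by (simp add: t_def)
  have Ppos: "0 < measure_pmf.prob px E" using t0 tP by (simp add: P_def)
  have dec: "\<And>k1 k2 x1 x2. length k1 = n \<Longrightarrow> length k2 = n \<Longrightarrow> length x1 = n \<Longrightarrow> length x2 = n \<Longrightarrow>
      Dec k1 k2 (E1 k1 x1) (E2 k2 x2) = ps (ph1 x1) (ph2 x2)"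
    using sys unfolding is_system_def by blast
  have inj0: "x = x'" if x: "x \<in> E" and x': "x' \<in> E" and k: "k \<in> set_pmf pk" and eq: "enc k x = enc k x'" for x x' k
  proof -
    obtain x1 x2 where xx: "x = (x1, x2)" by force
    obtain y1 y2 where yy: "x' = (y1, y2)" by force
    obtain k1 k2 where kk: "k = (k1, k2)" by force
    have lx: "length x1 = n" "length x2 = n" using x xx set_block_len unfolding E_def px_def by blast+
    have ly: "length y1 = n" "length y2 = n" using x' yy set_block_len unfolding E_def px_def by blast+
    have lk: "length k1 = n" "length k2 = n" using k kk set_block_len unfolding pk_def by blast+
    have e: "E1 k1 x1 = E1 k1 y1" "E2 k2 x2 = E2 k2 y2" using eq xx yy kk by (auto simp: enc_def)
    have "x = ps (ph1 x1) (ph2 x2)" using x xx by (simp add: E_def D_def)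
    also have "\<dots> = Dec k1 k2 (E1 k1 x1) (E2 k2 x2)" using dec lx lk by simp
    also have "\<dots> = Dec k1 k2 (E1 k1 y1) (E2 k2 y2)" using e by simp
    also have "\<dots> = ps (ph1 y1) (ph2 y2)" using dec ly lk by simp
    also have "\<dots> = x'" using x' yy by (simp add: E_def D_def)
    finally show ?thesis .
  qed
  have inE: "x \<in> typ_set pX n \<gamma>" "x \<in> set_pmf px" if "x \<in> E" for x using that by (auto simp: E_def)
  have ppos: "0 < pmf px x" if "x \<in> E" for x using inE(2)[OF that] by (simp add: pmf_positive)
  have mupos: "0 < pmf (map_pmf \<pi> px) (\<pi> x)" if "x \<in> E" for x and \<pi> :: "'a list \<times> 'b list \<Rightarrow> 'c"
    using inE(2)[OF that] by (simp add: pmf_positive)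
  have zeta: "zeta pX n \<gamma> \<epsilon> \<delta> = (1 / real n) * (\<delta> / t + log 2 (1 / t))"
    by (simp add: zeta_def t_def)

  have J: "entropy_pmf pX \<le> entropy_pmf pK + \<gamma> + zeta pX n \<gamma> \<epsilon> \<delta>"
  proof -
    have os: "(\<Sum>x\<in>E. pmf px x * log 2 (P * pmf (map_pmf (\<lambda>_. ()) px) ((\<lambda>_. ()) x) / pmf px x))
        \<le> P * entropy_pmf (map_pmf (\<lambda>k. k) pk) + MI"
      unfolding P_def MI_def
      by (rule one_shot[OF fx fk ES Ppos, where lam="\<lambda>c. c" and e'=enc]) (use inj0 in auto)
    have H: "entropy_pmf (map_pmf (\<lambda>k. k) pk) = real n * entropy_pmf pK"
      unfolding pk_def by (simp add: entropy_block)
    show ?thesis unfolding zeta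
    proof (rule finish[OF fE ppos _ PE t0 tP n \<delta> _ _ MI])
      show "(\<Sum>x\<in>E. pmf px x * log 2 (P * pmf (map_pmf (\<lambda>_. ()) px) ((\<lambda>_. ()) x) / pmf px x))
          \<le> P * (real n * entropy_pmf pK) + MI" using os H by simp
      fix x assume x: "x \<in> E"
      show "0 < pmf (map_pmf (\<lambda>_. ()) px) ((\<lambda>_. ()) x)" by simp
      obtain x1 x2 where xx: "x = (x1, x2)" by force
      have "\<bar>(1 / real n) * log 2 (1 / pmf (block_pmf n pX) (x1, x2)) - entropy_pmf pX\<bar> \<le> \<gamma>"
        using inE(1)[OF x] xx by (simp add: typ_set_def)
      then show "real n * (entropy_pmf pX - \<gamma>) \<le> log 2 (pmf (map_pmf (\<lambda>_. ()) px) ((\<lambda>_. ()) x) / pmf px x)"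
        using typ_lower[OF n] xx by (simp add: px_def)
    qed
  qed
  have lens: "length (fst x) = n" "length (snd x) = n" if "x \<in> E" for x
    using inE(2)[OF that] set_block_len[of "fst x" "snd x" n pX] unfolding px_def by auto
  have C1: "cond_entropy_pmf pX \<le> entropy_pmf (map_pmf fst pK) + \<gamma> + zeta pX n \<gamma> \<epsilon> \<delta>"
  proof -
    have os: "(\<Sum>x\<in>E. pmf px x * log 2 (P * pmf (map_pmf snd px) (snd x) / pmf px x))
        \<le> P * entropy_pmf (map_pmf fst pk) + MI"
      unfolding P_def MI_def
    proof (rule one_shot[OF fx fk ES Ppos, where lam=fst and e'="\<lambda>j x. E1 j (fst x)"])
      fix x x' k assume "x \<in> E" "x' \<in> E" "k \<in> set_pmf pk" "snd x = snd x'" "E1 (fst k) (fst x) = E1 (fst k) (fst x')"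
      then show "x = x'" using inj0[of x x' k] by (simp add: enc_def)
    qed (simp add: enc_def)
    have H: "entropy_pmf (map_pmf fst pk) = real n * entropy_pmf (map_pmf fst pK)"
      unfolding pk_def map_fst_block by (simp add: entropy_replicate)
    show ?thesis unfolding zeta
    proof (rule finish[OF fE ppos _ PE t0 tP n \<delta> _ _ MI])
      show "(\<Sum>x\<in>E. pmf px x * log 2 (P * pmf (map_pmf snd px) (snd x) / pmf px x))
          \<le> P * (real n * entropy_pmf (map_pmf fst pK)) + MI" using os H by simp
      fix x assume x: "x \<in> E"
      show "0 < pmf (map_pmf snd px) (snd x)" using mupos[OF x] .
      obtain x1 x2 where xx: "x = (x1, x2)" by force
      have l: "length x1 = n" "length x2 = n" using lens[OF x] xx by auto
      have b: "\<bar>(1 / real n) * log 2 (1 / cond_block_prob n pX x1 x2) - cond_entropy_pmf pX\<bar> \<le> \<gamma>"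
        using inE(1)[OF x] xx by (simp add: typ_set_def)
      have "pmf (map_pmf snd px) (snd x) / pmf px x = 1 / cond_block_prob n pX x1 x2"
        unfolding px_def map_snd_block xx cond_block_prob_def prod_dividef
        using l by (simp add: pmf_replicate pmf_block)
      then show "real n * (cond_entropy_pmf pX - \<gamma>) \<le> log 2 (pmf (map_pmf snd px) (snd x) / pmf px x)"
        using typ_lower[OF n b] by simp
    qed
  qed
  have C2: "cond_entropy_pmf (swap_pmf pX) \<le> entropy_pmf (map_pmf snd pK) + \<gamma> + zeta pX n \<gamma> \<epsilon> \<delta>"
  proof -
    have os: "(\<Sum>x\<in>E. pmf px x * log 2 (P * pmf (map_pmf fst px) (fst x) / pmf px x))
        \<le> P * entropy_pmf (map_pmf snd pk) + MI"
      unfolding P_def MI_def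
    proof (rule one_shot[OF fx fk ES Ppos, where lam=snd and e'="\<lambda>j x. E2 j (snd x)"])
      fix x x' k assume "x \<in> E" "x' \<in> E" "k \<in> set_pmf pk" "fst x = fst x'" "E2 (snd k) (snd x) = E2 (snd k) (snd x')"
      then show "x = x'" using inj0[of x x' k] by (simp add: enc_def)
    qed (simp add: enc_def)
    have H: "entropy_pmf (map_pmf snd pk) = real n * entropy_pmf (map_pmf snd pK)"
      unfolding pk_def map_snd_block by (simp add: entropy_replicate)
    show ?thesis unfolding zeta
    proof (rule finish[OF fE ppos _ PE t0 tP n \<delta> _ _ MI])
      show "(\<Sum>x\<in>E. pmf px x * log 2 (P * pmf (map_pmf fst px) (fst x) / pmf px x))
          \<le> P * (real n * entropy_pmf (map_pmf snd pK)) + MI" using os H by simp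
      fix x assume x: "x \<in> E"
      show "0 < pmf (map_pmf fst px) (fst x)" using mupos[OF x] .
      obtain x1 x2 where xx: "x = (x1, x2)" by force
      have l: "length x1 = n" "length x2 = n" using lens[OF x] xx by auto
      have b: "\<bar>(1 / real n) * log 2 (1 / cond_block_prob n (swap_pmf pX) x2 x1) - cond_entropy_pmf (swap_pmf pX)\<bar> \<le> \<gamma>"
        using inE(1)[OF x] xx by (simp add: typ_set_def)
      have "pmf (map_pmf fst px) (fst x) / pmf px x = 1 / cond_block_prob n (swap_pmf pX) x2 x1"
        unfolding px_def map_fst_block xx cond_block_prob_def prod_dividef
        using l by (simp add: pmf_replicate pmf_block pmf_swap map_snd_swap)
      then show "real n * (cond_entropy_pmf (swap_pmf pX) - \<gamma>) \<le> log 2 (pmf (map_pmf fst px) (fst x) / pmf px x)"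
        using typ_lower[OF n b] by simp
    qed
  qed
  show ?thesis using J C1 C2 by simp
qed


theorem proposition1:
  fixes pX pK :: "('a :: {finite, field} \<times> 'b :: {finite, field}) pmf"
    and \<delta>0 \<epsilon> \<delta> :: real
  assumes "\<delta>0 > 0"
    and "0 < \<epsilon>" and "\<epsilon> < 1"
    and "0 < \<delta>" and "\<delta> \<le> \<delta>0"
    and "rate_region \<epsilon> \<delta> pX pK \<noteq> {}"
  shows "\<forall>\<gamma>>0. \<exists>n0. \<forall>n\<ge>n0.
           cond_entropy_pmf pX \<le> entropy_pmf (map_pmf fst pK) + \<gamma> + zeta pX n \<gamma> \<epsilon> \<delta> \<and>
           cond_entropy_pmf (swap_pmf pX) \<le> entropy_pmf (map_pmf snd pK) + \<gamma> + zeta pX n \<gamma> \<epsilon> \<delta> \<and>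
           entropy_pmf pX \<le> entropy_pmf pK + \<gamma> + zeta pX n \<gamma> \<epsilon> \<delta>"
proof (intro allI impI)
  fix \<gamma> :: real assume g: "\<gamma> > 0"
  from assms(6) obtain R1 R2 where "(R1, R2) \<in> rate_region \<epsilon> \<delta> pX pK" by auto
  then obtain C1 C2 Enc1 Enc2 Dec M1 M2 ph1 ph2 ps where
      sys: "\<forall>n\<ge>1. is_system n (C1 n) (C2 n) (Enc1 n) (Enc2 n) (Dec n) (M1 n) (M2 n) (ph1 n) (ph2 n) (ps n)" and
      lim: "\<forall>\<gamma>>0. \<exists>n0. \<forall>n\<ge>n0.
          (1 / real n) * log 2 (real (card (C1 n))) \<le> R1 + \<gamma> \<and>
          (1 / real n) * log 2 (real (card (C2 n))) \<le> R2 + \<gamma> \<and>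
          error_prob n pX (ph1 n) (ph2 n) (ps n) \<le> \<epsilon> \<and>
          mutual_info_pmf (cipher_source_pmf n pX pK (Enc1 n) (Enc2 n)) \<le> \<delta>"
    unfolding rate_region_def by blast
  obtain n0 where n0: "\<forall>n\<ge>n0. error_prob n pX (ph1 n) (ph2 n) (ps n) \<le> \<epsilon> \<and>
          mutual_info_pmf (cipher_source_pmf n pX pK (Enc1 n) (Enc2 n)) \<le> \<delta>"
    using lim by (meson zero_less_one)
  have c: "0 < (1 - \<epsilon>) / 2" using assms(3) by simp
  obtain N where N: "\<forall>n\<ge>N. nu pX n \<gamma> \<le> (1 - \<epsilon>) / 2" using nu_eventually[OF g c] by blast
  show "\<exists>n0. \<forall>n\<ge>n0.
           cond_entropy_pmf pX \<le> entropy_pmf (map_pmf fst pK) + \<gamma> + zeta pX n \<gamma> \<epsilon> \<delta> \<and>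
           cond_entropy_pmf (swap_pmf pX) \<le> entropy_pmf (map_pmf snd pK) + \<gamma> + zeta pX n \<gamma> \<epsilon> \<delta> \<and>
           entropy_pmf pX \<le> entropy_pmf pK + \<gamma> + zeta pX n \<gamma> \<epsilon> \<delta>"
  proof (intro exI allI impI)
    fix n assume n: "max (max n0 N) 1 \<le> n"
    have s: "is_system n (C1 n) (C2 n) (Enc1 n) (Enc2 n) (Dec n) (M1 n) (M2 n) (ph1 n) (ph2 n) (ps n)"
      using sys n by simp
    have e: "error_prob n pX (ph1 n) (ph2 n) (ps n) \<le> \<epsilon>"
      and m: "mutual_info_pmf (cipher_source_pmf n pX pK (Enc1 n) (Enc2 n)) \<le> \<delta>"
      using n0 n by auto
    have "nu pX n \<gamma> \<le> (1 - \<epsilon>) / 2" using N n by simp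
    then have t: "0 < 1 - nu_eps pX n \<gamma> \<epsilon>" using assms(3) by (simp add: nu_eps_def)
    show "cond_entropy_pmf pX \<le> entropy_pmf (map_pmf fst pK) + \<gamma> + zeta pX n \<gamma> \<epsilon> \<delta> \<and>
           cond_entropy_pmf (swap_pmf pX) \<le> entropy_pmf (map_pmf snd pK) + \<gamma> + zeta pX n \<gamma> \<epsilon> \<delta> \<and>
           entropy_pmf pX \<le> entropy_pmf pK + \<gamma> + zeta pX n \<gamma> \<epsilon> \<delta>"
      using n by (intro per_n[OF s _ e m t]) (use assms(4) in auto)
  qed
qed


end
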